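(* Let $\mathsf{inv}(x,y)$ be the formula $(x^2y\approx x)\wedge(xy^2\approx y)$ and, for a prime $p$, let $\exists\mathsf{root}_p(x,y)$ be $\exists z\,(\mathsf{inv}(p,z)\wedge y^p\approx(1-zp)x)$. Then for every prime $p$: (i) $\mathsf{inv}(x,y)$ defines a unary pp definable extendable implicit operation $g$ of $\mathsf{RCR}$ such that for every weakly rooted field $\mathbf A$, $g^{\mathbf A}$ is total and $g^{\mathbf A}(a)=a^*$ for all $a\in A$; (ii) $\exists\mathsf{root}_p(x,y)$ defines a unary pp definable extendable implicit operation $f_p$ of $\mathsf{RCR}$ such that for every weakly rooted field $\mathbf A$, $f_p^{\mathbf A}$ is total and $f_p^{\mathbf A}(a)=r_p(a)$ for all $a\in A$.
   Context: Rings are unital in the language $\{+,\cdot,-,0,1\}$; $p$ in a term denotes $1+\dots+1$ ($p$ times). $\mathsf{RCR}$ is the quasivariety of reduced commutative rings. A field is weakly rooted if it has characteristic $0$, or prime characteristic $p$ with every element having a $p$-th root. Weak inverse: $a^*=a^{-1}$ if $a\ne0$, $0^*=0$; weak $p$-root: $r_p(a)=\sqrt[p]{a}$ if the characteristic is $p$, else $0$. For a quasivariety $\mathsf K$, an $n$-ary operation of $\mathsf K$ is a family $f=\langle f^{\mathbf A}:\mathbf A\in\mathsf K\rangle$ of partial $n$-ary functions preserved by all homomorphisms between members of $\mathsf K$ (tuples in the domain are mapped into the domain and $f$ commutes with the homomorphism). It is implicit and defined by a formula $\varphi(\vec x,y)$ if for all $\mathbf A\in\mathsf K$, $\mathbf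 A\models\varphi(\vec a,b)$ iff $\vec a\in\mathrm{dom}(f^{\mathbf A})$ and $f^{\mathbf A}(\vec a)=b$; pp definable if $\varphi$ is primitive positive. It is extendable if for every $\mathbf A\in\mathsf K$ and $\vec a\in \mathrm{dom}(f^{\mathbf A})$ there is $\mathbf B\in\mathsf K$ with $\mathbf A\le\mathbf B$ and $\vec a\in\mathrm{dom}(f^{\mathbf B})$. *)

theory Defs
  imports "HOL-Computational_Algebra.Primes" "HOL-Algebra.Ring" "HOL-Algebra.RingHom"
begin

definition numc :: "'a ring \<Rightarrow> nat \<Rightarrow> 'a" where
  "numc R p = add_pow R p \<one>\<^bsub>R\<^esub>"

definition reduced_cring :: "'a ring \<Rightarrow> bool" where
  "reduced_cring R \<longleftrightarrow> cring R \<and>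
     (\<forall>x\<in>carrier R. \<forall>n::nat. x [^]\<^bsub>R\<^esub> n = \<zero>\<^bsub>R\<^esub> \<longrightarrow> x = \<zero>\<^bsub>R\<^esub>)"

definition inv_rel :: "'a ring \<Rightarrow> 'a \<Rightarrow> 'a \<Rightarrow> bool" where
  "inv_rel R x y \<longleftrightarrow>
     (x \<otimes>\<^bsub>R\<^esub> x) \<otimes>\<^bsub>R\<^esub> y = x \<and> x \<otimes>\<^bsub>R\<^esub> (y \<otimes>\<^bsub>R\<^esub> y) = y"

definition root_rel :: "nat \<Rightarrow> 'a ring \<Rightarrow> 'a \<Rightarrow> 'a \<Rightarrow> bool" where
  "root_rel p R x y \<longleftrightarrow>
     (\<exists>z\<in>carrier R. inv_rel R (numc R p) z \<and>
        y [^]\<^bsub>R\<^esub> p = (\<one>\<^bsub>R\<^esub> \<ominus>\<^bsub>R\<^esub> z \<otimes>\<^bsub>R\<^esub> numc R p) \<otimes>\<^bsub>R\<^esub> x)"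

definition functional_in_RCR :: "('a ring \<Rightarrow> 'a \<Rightarrow> 'a \<Rightarrow> bool) \<Rightarrow> bool" where
  "functional_in_RCR \<phi> \<longleftrightarrow>
     (\<forall>A. reduced_cring A \<longrightarrow>
        (\<forall>x\<in>carrier A. \<forall>y1\<in>carrier A. \<forall>y2\<in>carrier A.
            \<phi> A x y1 \<longrightarrow> \<phi> A x y2 \<longrightarrow> y1 = y2))"

(* Preservation by all homomorphisms between members of RCR
   (phiA, phiB are the same formula interpreted at the two carrier types) *)
definition preserved_by_homs :: "('a ring \<Rightarrow> 'a \<Rightarrow> 'a \<Rightarrow> bool) \<Rightarrow> ('b ring \<Rightarrow> 'b \<Rightarrow> 'b \<Rightarrow> bool) \<Rightarrow> bool" where
  "preserved_by_homs \<phi>A \<phi>B \<longleftrightarrow>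
     (\<forall>A B h. reduced_cring A \<longrightarrow> reduced_cring B \<longrightarrow> h \<in> ring_hom A B \<longrightarrow>
        (\<forall>x\<in>carrier A. \<forall>y\<in>carrier A. \<phi>A A x y \<longrightarrow> \<phi>B B (h x) (h y)))"

(* B is taken on the type ('a set => 'a list), which is large enough to carry the
   standard extensions (subrings of products over prime ideals of A of fields of
   cardinality at most max(|A|, aleph_0)). *)
definition extendable_RCR :: "(('a set \<Rightarrow> 'a list) ring \<Rightarrow> ('a set \<Rightarrow> 'a list) \<Rightarrow> ('a set \<Rightarrow> 'a list) \<Rightarrow> bool) \<Rightarrow> bool" where
  "extendable_RCR \<phi>B \<longleftrightarrow>
     (\<forall>A :: 'a ring. reduced_cring A \<longrightarrow>
        (\<forall>x\<in>carrier A. \<exists>B h. reduced_cring B \<and> h \<in> ring_hom A B \<and> inj_on h (carrier A) \<and>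
            (\<exists>y\<in>carrier B. \<phi>B B (h x) y)))"

definition char_zero :: "'a ring \<Rightarrow> bool" where
  "char_zero R \<longleftrightarrow> (\<forall>n::nat. n > 0 \<longrightarrow> numc R n \<noteq> \<zero>\<^bsub>R\<^esub>)"

definition weakly_rooted_field :: "'a ring \<Rightarrow> bool" where
  "weakly_rooted_field R \<longleftrightarrow> field R \<and>
     (char_zero R \<or>
      (\<exists>q::nat. prime q \<and> numc R q = \<zero>\<^bsub>R\<^esub> \<and>
         (\<forall>a\<in>carrier R. \<exists>b\<in>carrier R. b [^]\<^bsub>R\<^esub> q = a)))"

definition weak_inv :: "'a ring \<Rightarrow> 'a \<Rightarrow> 'a" where
  "weak_inv R a = (if a = \<zero>\<^bsub>R\<^esub> then \<zero>\<^bsub>R\<^esub> else inv\<^bsub>R\<^esub> a)"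

definition weak_root :: "nat \<Rightarrow> 'a ring \<Rightarrow> 'a \<Rightarrow> 'a" where
  "weak_root p R a = (if numc R p = \<zero>\<^bsub>R\<^esub>
      then (THE b. b \<in> carrier R \<and> b [^]\<^bsub>R\<^esub> p = a) else \<zero>\<^bsub>R\<^esub>)"

end

theory Submission imports Defs "HOL-Algebra.Chinese_Remainder" "HOL-Algebra.QuotRing" begin

locale cr = cring R for R :: "'a ring" (structure)

lemma (in cr) numc_closed[simp]: "numc R n \<in> carrier R"
  by (simp add: numc_def)

lemma (in cr) numc_0[simp]: "numc R 0 = \<zero>"
  by (simp add: numc_def)

lemma (in cr) numc_Suc: "numc R (Suc n) = numc R n \<oplus> \<one>"
  by (simp add: numc_def add.nat_pow_Suc)

lemma (in cr) numc_add: "numc R (m + n) = numc R m \<oplus> numc R n"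
  by (simp add: numc_def add.nat_pow_mult)

lemma (in cr) numc_mult: "numc R (m * n) = numc R m \<otimes> numc R n"
  by (induct n) (simp_all add: numc_Suc numc_add r_distr a_comm)

lemma hom_numc:
  fixes A :: "'a ring" and B :: "'b ring"
  assumes "cring A" "cring B" "h \<in> ring_hom A B"
  shows "h (numc A n) = numc B n"
proof -
  interpret A: cr A by (simp add: cr_def assms)
  interpret B: cr B by (simp add: cr_def assms)
  interpret ring_hom_ring A B h by (simp add: ring_hom_ringI2 A.ring_axioms B.ring_axioms assms)
  show ?thesis by (induct n) (simp_all add: A.numc_Suc B.numc_Suc)
qed

lemma (in cr) inv_rel_unique:
  assumes x: "x \<in> carrier R" and y1: "y1 \<in> carrier R" and y2: "y2 \<in> carrier R"
    and h1: "inv_rel R x y1" and h2: "inv_rel R x y2"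
  shows "y1 = y2"
proof -
  have a1: "x \<otimes> x \<otimes> y1 = x" and b1: "x \<otimes> (y1 \<otimes> y1) = y1"
    using h1 by (auto simp: inv_rel_def)
  have a2: "x \<otimes> x \<otimes> y2 = x" and b2: "x \<otimes> (y2 \<otimes> y2) = y2"
    using h2 by (auto simp: inv_rel_def)
  have e1: "x \<otimes> y1 = (x \<otimes> y2) \<otimes> (x \<otimes> y1)"
  proof -
    have "x \<otimes> y1 = (x \<otimes> x \<otimes> y2) \<otimes> y1" using a2 by simp
    also have "\<dots> = (x \<otimes> y2) \<otimes> (x \<otimes> y1)" using x y1 y2 by algebra
    finally show ?thesis .
  qed
  have e2: "x \<otimes> y2 = (x \<otimes> y1) \<otimes> (x \<otimes> y2)"
  proof -
    have "x \<otimes> y2 = (x \<otimes> x \<otimes> y1) \<otimes> y2" using a1 by simp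
    also have "\<dots> = (x \<otimes> y1) \<otimes> (x \<otimes> y2)" using x y1 y2 by algebra
    finally show ?thesis .
  qed
  have e: "x \<otimes> y1 = x \<otimes> y2" using e1 e2 x y1 y2 by (simp add: m_comm)
  have "y1 = (x \<otimes> y1) \<otimes> y1" using b1 x y1 by (simp add: m_assoc)
  also have "\<dots> = (x \<otimes> y2) \<otimes> y1" using e by simp
  also have "\<dots> = y2 \<otimes> (x \<otimes> y1)" using x y1 y2 by algebra
  also have "\<dots> = y2 \<otimes> (x \<otimes> y2)" using e by simp
  also have "\<dots> = y2" using b2 x y2 by algebra
  finally show ?thesis .
qed

lemma inv_rel_hom:
  assumes "ring_hom_ring A B h" "x \<in> carrier A" "y \<in> carrier A" "inv_rel A x y"
  shows "inv_rel B (h x) (h y)"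
proof -
  interpret ring_hom_ring A B h by fact
  show ?thesis using assms(2-4) unfolding inv_rel_def
    by (metis hom_mult R.m_closed)
qed

locale fd = field R for R :: "'a ring" (structure)
sublocale fd \<subseteq> cr by unfold_locales

lemma (in fd) inv_rel_field:
  assumes a: "a \<in> carrier R" and b: "b \<in> carrier R"
  shows "inv_rel R a b \<longleftrightarrow> b = weak_inv R a"
proof (cases "a = \<zero>")
  case True
  then show ?thesis using b by (auto simp: inv_rel_def weak_inv_def)
next
  case False
  then have u: "a \<in> Units R" using a field_Units by auto
  have w: "weak_inv R a = inv a" using False by (simp add: weak_inv_def)
  have iw: "inv_rel R a (inv a)"
    unfolding inv_rel_def using u a
    by (simp add: m_assoc[symmetric] Units_r_inv Units_l_inv m_assoc Units_inv_closed)
  show ?thesis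
  proof
    assume "inv_rel R a b"
    then show "b = weak_inv R a" using inv_rel_unique[OF a b _ _ iw] u w by (simp add: Units_inv_closed)
  next
    assume "b = weak_inv R a" then show "inv_rel R a b" using iw w by simp
  qed
qed




lemma (in cr) binomial:
  assumes a: "a \<in> carrier R" and b: "b \<in> carrier R"
  shows "(a \<oplus> b) [^] n = (\<Oplus>k\<in>{..n}. add_pow R (n choose k) (a [^] k \<otimes> b [^] (n - k)))"
proof (induct n)
  case 0 then show ?case using a b by simp
next
  case (Suc n)
  define S where "S = (\<Oplus>k\<in>{..n}. add_pow R (n choose k) (a [^] k \<otimes> b [^] (n - k)))"
  define T1 where "T1 = (\<Oplus>k\<in>{..n}. add_pow R (n choose k) (a [^] Suc k \<otimes> b [^] (n - k)))"
  define T2 where "T2 = (\<Oplus>k\<in>{..n}. add_pow R (n choose k) (a [^] k \<otimes> b [^] (Suc n - k)))"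
  define T3 where "T3 = (\<Oplus>k\<in>{..n}. add_pow R (n choose Suc k) (a [^] Suc k \<otimes> b [^] (n - k)))"
  have S_c: "S \<in> carrier R" unfolding S_def using a b by (auto intro!: finsum_closed)
  have "(a \<oplus> b) [^] Suc n = S \<otimes> a \<oplus> S \<otimes> b"
    using Suc a b S_c by (simp add: S_def r_distr)
  also have "S \<otimes> a = T1"
  proof -
    have "S \<otimes> a = (\<Oplus>k\<in>{..n}. add_pow R (n choose k) (a [^] k \<otimes> b [^] (n - k)) \<otimes> a)"
      unfolding S_def using a b by (simp add: finsum_ldistr)
    also have "\<dots> = T1" unfolding T1_def
    proof (rule finsum_cong')
      fix k assume "k \<in> {..n}"
      have e: "(a [^] k \<otimes> b [^] (n - k)) \<otimes> a = a [^] Suc k \<otimes> b [^] (n - k)"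
        using a b nat_pow_closed[OF a, of k] nat_pow_closed[OF b, of "n-k"] unfolding nat_pow_Suc by algebra
      show "add_pow R (n choose k) (a [^] k \<otimes> b [^] (n - k)) \<otimes> a = add_pow R (n choose k) (a [^] Suc k \<otimes> b [^] (n - k))"
        using a b by (simp add: add_pow_ldistr e)
    qed (use a b in auto)
    finally show ?thesis .
  qed
  also have "S \<otimes> b = T2"
  proof -
    have "S \<otimes> b = (\<Oplus>k\<in>{..n}. add_pow R (n choose k) (a [^] k \<otimes> b [^] (n - k)) \<otimes> b)"
      unfolding S_def using a b by (simp add: finsum_ldistr)
    also have "\<dots> = T2" unfolding T2_def
    proof (rule finsum_cong')
      fix k assume k: "k \<in> {..n}"
      have s: "Suc n - k = Suc (n - k)" using k by auto
      have e: "(a [^] k \<otimes> b [^] (n - k)) \<otimes> b = a [^] k \<otimes> b [^] (Suc n - k)"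
        using a b nat_pow_closed[OF a, of k] nat_pow_closed[OF b, of "n-k"] unfolding s nat_pow_Suc by algebra
      show "add_pow R (n choose k) (a [^] k \<otimes> b [^] (n - k)) \<otimes> b = add_pow R (n choose k) (a [^] k \<otimes> b [^] (Suc n - k))"
        using a b by (simp add: add_pow_ldistr e)
    qed (use a b in auto)
    finally show ?thesis .
  qed
  also have "T2 = T3 \<oplus> b [^] Suc n"
  proof -
    have "T2 = (\<Oplus>k\<in>{..Suc n}. add_pow R (n choose k) (a [^] k \<otimes> b [^] (Suc n - k)))"
      unfolding T2_def using a b by (simp add: finsum_Suc binomial_eq_0)
    also have "\<dots> = T3 \<oplus> b [^] Suc n"
      unfolding T3_def using a b by (subst finsum_Suc2) auto
    finally show ?thesis .
  qed
  also have "T1 \<oplus> (T3 \<oplus> b [^] Suc n) = (\<Oplus>k\<in>{..Suc n}. add_pow R (Suc n choose k) (a [^] k \<otimes> b [^] (Suc n - k)))"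
  proof -
    have "(\<Oplus>k\<in>{..Suc n}. add_pow R (Suc n choose k) (a [^] k \<otimes> b [^] (Suc n - k)))
        = (\<Oplus>k\<in>{..n}. add_pow R (Suc n choose Suc k) (a [^] Suc k \<otimes> b [^] (n - k))) \<oplus> b [^] Suc n"
      using a b by (subst finsum_Suc2) auto
    also have "(\<Oplus>k\<in>{..n}. add_pow R (Suc n choose Suc k) (a [^] Suc k \<otimes> b [^] (n - k))) = T1 \<oplus> T3"
    proof -
      have "T1 \<oplus> T3 = (\<Oplus>k\<in>{..n}. add_pow R (n choose k) (a [^] Suc k \<otimes> b [^] (n - k)) \<oplus> add_pow R (n choose Suc k) (a [^] Suc k \<otimes> b [^] (n - k)))"
        unfolding T1_def T3_def using a b by (intro finsum_addf[symmetric]) auto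
      also have "\<dots> = (\<Oplus>k\<in>{..n}. add_pow R (Suc n choose Suc k) (a [^] Suc k \<otimes> b [^] (n - k)))"
        using a b by (intro finsum_cong') (auto simp: add.nat_pow_mult)
      finally show ?thesis by simp
    qed
    finally show ?thesis using a b unfolding T1_def T3_def
      by (simp add: a_assoc finsum_closed)
  qed
  finally show ?case .
qed

lemma (in cr) freshman:
  assumes p: "prime p" and a: "a \<in> carrier R" and b: "b \<in> carrier R"
    and pa: "numc R p \<otimes> a = \<zero>"
  shows "(a \<oplus> b) [^] p = a [^] p \<oplus> b [^] p"
proof -
  define f where "f k = add_pow R (p choose k) (a [^] k \<otimes> b [^] (p - k))" for k
  define m where "m = p - 2"
  have pm: "p = Suc (Suc m)" using prime_ge_2_nat[OF p] unfolding m_def by arith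
  have fc: "f \<in> UNIV \<rightarrow> carrier R" unfolding f_def using a b by auto
  have mid: "f (Suc k) = \<zero>" if "k \<le> m" for k
  proof -
    have "p dvd (p choose Suc k)" using p that pm by (intro dvd_choose_prime) auto
    then obtain c where c: "p choose Suc k = p * c" by (auto elim: dvdE)
    have "add_pow R (p) (a [^] Suc k \<otimes> b [^] (p - Suc k)) = numc R p \<otimes> (a [^] Suc k \<otimes> b [^] (p - Suc k))"
      unfolding numc_def using a b by (simp add: add_pow_ldistr)
    also have "\<dots> = (numc R p \<otimes> a) \<otimes> (a [^] k \<otimes> b [^] (p - Suc k))"
      using a b numc_closed[of p] nat_pow_closed[OF a, of k] nat_pow_closed[OF b, of "p - Suc k"] unfolding nat_pow_Suc by algebra
    also have "\<dots> = \<zero>" using pa a b by simp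
    finally have "add_pow R (p) (a [^] Suc k \<otimes> b [^] (p - Suc k)) = \<zero>" .
    then show ?thesis unfolding f_def c using a b add.nat_pow_pow[of "a [^] Suc k \<otimes> b [^] (p - Suc k)" c p]
      by simp
  qed
  have "(a \<oplus> b) [^] p = finsum R f {..p}" unfolding f_def by (rule binomial[OF a b])
  also have "\<dots> = finsum R f {..Suc (Suc m)}" using pm by simp
  also have "\<dots> = f (Suc (Suc m)) \<oplus> finsum R f {..Suc m}"
    using fc by (intro finsum_Suc) auto
  also have "finsum R f {..Suc m} = (\<Oplus>k\<in>{..m}. f (Suc k)) \<oplus> f 0"
    using fc by (intro finsum_Suc2) auto
  also have "(\<Oplus>k\<in>{..m}. f (Suc k)) = \<zero>"
  proof -
    have "(\<Oplus>k\<in>{..m}. f (Suc k)) = (\<Oplus>k\<in>{..m}. \<zero>)"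
      using mid by (intro finsum_cong') auto
    then show ?thesis by simp
  qed
  finally show ?thesis unfolding f_def using a b pm fc by simp
qed




lemma (in cr) idem_pow: "e \<in> carrier R \<Longrightarrow> e \<otimes> e = e \<Longrightarrow> e [^] Suc n = e"
  by (induct n) (simp_all add: nat_pow_Suc2 m_assoc[symmetric])

lemma (in cr) root_rel_unique:
  assumes red: "\<forall>x\<in>carrier R. \<forall>n::nat. x [^] n = \<zero> \<longrightarrow> x = \<zero>"
    and p: "prime p" and x: "x \<in> carrier R" and y1: "y1 \<in> carrier R" and y2: "y2 \<in> carrier R"
    and h1: "root_rel p R x y1" and h2: "root_rel p R x y2"
  shows "y1 = y2"
proof -
  define P where "P = numc R p"
  have Pc: "P \<in> carrier R" unfolding P_def by simp
  obtain z1 where z1: "z1 \<in> carrier R" "inv_rel R P z1" "y1 [^] p = (\<one> \<ominus> z1 \<otimes> P) \<otimes> x"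
    using h1 unfolding root_rel_def P_def by blast
  obtain z where z: "z \<in> carrier R" "inv_rel R P z" "y2 [^] p = (\<one> \<ominus> z \<otimes> P) \<otimes> x"
    using h2 unfolding root_rel_def P_def by blast
  have "z1 = z" using inv_rel_unique[OF Pc z1(1) z(1) z1(2) z(2)] .
  with z1 have y1p: "y1 [^] p = (\<one> \<ominus> z \<otimes> P) \<otimes> x" by simp
  have hP: "P \<otimes> P \<otimes> z = P" using z(2) by (simp add: inv_rel_def)
  define e where "e = z \<otimes> P"
  have ec: "e \<in> carrier R" unfolding e_def using z Pc by simp
  have ee: "e \<otimes> e = e"
  proof -
    have "e \<otimes> e = z \<otimes> (P \<otimes> P \<otimes> z)" unfolding e_def using z Pc by algebra
    also have "\<dots> = e" unfolding hP e_def ..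
    finally show ?thesis .
  qed
  have Pe: "P \<otimes> e = P"
  proof -
    have "P \<otimes> e = P \<otimes> P \<otimes> z" unfolding e_def using z Pc by algebra
    then show ?thesis using hP by simp
  qed
  have p1: "p = Suc (p - 1)" using prime_gt_0_nat[OF p] by simp
  have Py: "P \<otimes> y = \<zero>" if y: "y \<in> carrier R" and yp: "y [^] p = (\<one> \<ominus> e) \<otimes> x" for y
  proof -
    have "(e \<otimes> y) [^] p = e [^] p \<otimes> y [^] p" using ec y by (simp add: nat_pow_distrib)
    also have "e [^] p = e" using idem_pow[OF ec ee, of "p - 1"] p1 by simp
    also have "e \<otimes> y [^] p = (e \<ominus> e \<otimes> e) \<otimes> x" unfolding yp using ec x by algebra
    also have "\<dots> = \<zero>" unfolding ee using ec x by algebra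
    finally have ey: "(e \<otimes> y) [^] p = \<zero>" .
    have "e \<otimes> y = \<zero>" by (rule red[rule_format, OF m_closed[OF ec y] ey])
    then have "P \<otimes> (e \<otimes> y) = \<zero>" using Pc by simp
    moreover have "P \<otimes> (e \<otimes> y) = (P \<otimes> e) \<otimes> y" using Pc ec y by algebra
    ultimately show ?thesis using Pe by simp
  qed
  have P1: "P \<otimes> y1 = \<zero>" using Py[OF y1] y1p unfolding e_def by simp
  have P2: "P \<otimes> y2 = \<zero>" using Py[OF y2] z(3) unfolding e_def by simp
  define u where "u = y1 \<ominus> y2"
  have uc: "u \<in> carrier R" unfolding u_def using y1 y2 by simp
  have Pu: "P \<otimes> u = \<zero>"
  proof -
    have "P \<otimes> u = P \<otimes> y1 \<ominus> P \<otimes> y2" unfolding u_def using Pc y1 y2 by algebra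
    then show ?thesis using P1 P2 by (simp add: minus_eq)
  qed
  have uy: "u \<oplus> y2 = y1" unfolding u_def using y1 y2 by algebra
  have "y1 [^] p = u [^] p \<oplus> y2 [^] p"
    using freshman[OF p uc y2] Pu uy unfolding P_def by simp
  then have "u [^] p \<oplus> y2 [^] p = y2 [^] p" using y1p z(3) by simp
  then have "u [^] p = \<zero>" using uc y2
    by (metis add.r_cancel_one' nat_pow_closed)
  then have "u = \<zero>" using red uc by blast
  then show ?thesis using uy y2 by simp
qed

lemma root_rel_hom:
  fixes A :: "'a ring" and B :: "'b ring"
  assumes "cring A" "cring B" "h \<in> ring_hom A B" "x \<in> carrier A" "y \<in> carrier A" "root_rel p A x y"
  shows "root_rel p B (h x) (h y)"
proof -
  interpret A: cr A by (simp add: cr_def assms)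
  interpret B: cr B by (simp add: cr_def assms)
  interpret ring_hom_cring A B h by (rule ring_hom_cringI[OF ring_hom_ringI2[OF A.ring_axioms B.ring_axioms assms(3)] A.is_cring B.is_cring])
  obtain z where z: "z \<in> carrier A" "inv_rel A (numc A p) z" "y [^]\<^bsub>A\<^esub> p = (\<one>\<^bsub>A\<^esub> \<ominus>\<^bsub>A\<^esub> z \<otimes>\<^bsub>A\<^esub> numc A p) \<otimes>\<^bsub>A\<^esub> x"
    using assms(6) unfolding root_rel_def by blast
  have hn: "h (numc A p) = numc B p" using hom_numc[OF assms(1-3)] .
  have "inv_rel B (h (numc A p)) (h z)"
    using inv_rel_hom[OF ring_hom_ringI2[OF A.ring_axioms B.ring_axioms assms(3)]] z by simp
  then have i: "inv_rel B (numc B p) (h z)" using hn by simp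
  have "h (y [^]\<^bsub>A\<^esub> p) = (h y) [^]\<^bsub>B\<^esub> p" using assms(5) by (simp add: ring_hom_ring.hom_nat_pow[OF ring_hom_ringI2[OF A.ring_axioms B.ring_axioms assms(3)]])
  moreover have "h ((\<one>\<^bsub>A\<^esub> \<ominus>\<^bsub>A\<^esub> z \<otimes>\<^bsub>A\<^esub> numc A p) \<otimes>\<^bsub>A\<^esub> x) = (\<one>\<^bsub>B\<^esub> \<ominus>\<^bsub>B\<^esub> h z \<otimes>\<^bsub>B\<^esub> numc B p) \<otimes>\<^bsub>B\<^esub> h x"
    using z(1) assms(4) hn by (simp add: A.minus_eq B.minus_eq)
  ultimately show ?thesis unfolding root_rel_def using z i by (auto intro!: bexI[of _ "h z"])
qed




lemma (in fd) field_reduced: "\<forall>x\<in>carrier R. \<forall>n::nat. x [^] n = \<zero> \<longrightarrow> x = \<zero>"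
proof (intro ballI allI impI)
  fix x and n :: nat assume x: "x \<in> carrier R" and h: "x [^] n = \<zero>"
  then show "x = \<zero>"
  proof (induct n)
    case 0 then show ?case by simp
  next
    case (Suc n)
    then have "x [^] n \<otimes> x = \<zero>" by simp
    then have "x [^] n = \<zero> \<or> x = \<zero>" using x by (simp add: integral_iff)
    then show ?case using Suc by auto
  qed
qed

lemma (in fd) root_rel_field:
  assumes wr: "weakly_rooted_field R" and p: "prime p"
    and a: "a \<in> carrier R" and b: "b \<in> carrier R"
  shows "root_rel p R a b \<longleftrightarrow> b = weak_root p R a"
proof (cases "numc R p = \<zero>")
  case False
  define P where "P = numc R p"
  have Pc: "P \<in> carrier R" unfolding P_def by simp
  have PU: "P \<in> Units R" using False Pc field_Units unfolding P_def by auto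
  have w: "weak_root p R a = \<zero>" using False by (simp add: weak_root_def)
  have zi: "inv_rel R P z \<longleftrightarrow> z = inv P" if "z \<in> carrier R" for z
    using inv_rel_field[OF Pc that] False by (simp add: weak_inv_def P_def)
  have "root_rel p R a b \<longleftrightarrow> b [^] p = (\<one> \<ominus> inv P \<otimes> P) \<otimes> a"
    unfolding root_rel_def P_def[symmetric] using zi PU by (auto intro!: bexI[of _ "inv P"])
  also have "(\<one> \<ominus> inv P \<otimes> P) \<otimes> a = \<zero>" using PU a by (simp add: r_neg minus_eq)
  also have "b [^] p = \<zero> \<longleftrightarrow> b = \<zero>"
    using field_reduced b prime_gt_0_nat[OF p] by (auto simp: nat_pow_zero)
  finally show ?thesis using w by simp
next
  case True
  have zi: "inv_rel R \<zero> z \<longleftrightarrow> z = \<zero>" if "z \<in> carrier R" for z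
    using inv_rel_field[OF zero_closed that] by (simp add: weak_inv_def)
  have rr: "root_rel p R a c \<longleftrightarrow> c [^] p = a" if c: "c \<in> carrier R" for c
    unfolding root_rel_def True using zi a by (auto simp: minus_eq)
  have ex: "\<exists>c\<in>carrier R. c [^] p = a"
  proof -
    have "char_zero R \<or> (\<exists>q::nat. prime q \<and> numc R q = \<zero> \<and> (\<forall>a\<in>carrier R. \<exists>b\<in>carrier R. b [^] q = a))"
      using wr unfolding weakly_rooted_field_def by simp
    moreover have "\<not> char_zero R" using True prime_gt_0_nat[OF p] unfolding char_zero_def by auto
    ultimately obtain q where q: "prime q" "numc R q = \<zero>" "\<forall>a\<in>carrier R. \<exists>b\<in>carrier R. b [^] q = a"
      by blast
    have "p = q"
    proof (rule ccontr)
      assume ne: "p \<noteq> q"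
      then have "coprime p q" using p q(1) by (simp add: primes_coprime)
      then have g: "gcd p q = 1" by simp
      obtain x y where xy: "p * x = q * y + gcd p q" using bezout_nat[of p q] p by (auto simp: prime_gt_0_nat)
      have "numc R (p * x) = \<zero>" using True by (simp add: numc_mult)
      moreover have "numc R (q * y + 1) = \<one>" using q(2) by (simp only: Suc_eq_plus1[symmetric] numc_Suc numc_mult) simp
      ultimately show False using xy g by simp
    qed
    then show ?thesis using q(3) a by blast
  qed
  have un: "c1 = c2" if "c1 \<in> carrier R" "c2 \<in> carrier R" "c1 [^] p = a" "c2 [^] p = a" for c1 c2
    using root_rel_unique[OF field_reduced p a that(1,2)] rr that by simp
  have w: "weak_root p R a = (THE c. c \<in> carrier R \<and> c [^] p = a)" using True by (simp add: weak_root_def)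
  show ?thesis
  proof
    assume "root_rel p R a b"
    then have bb: "b [^] p = a" using rr[OF b] by simp
    show "b = weak_root p R a" unfolding w
      by (rule the_equality[symmetric]) (use b bb un in auto)
  next
    assume bw: "b = weak_root p R a"
    obtain c where c: "c \<in> carrier R" "c [^] p = a" using ex by blast
    have "weak_root p R a = c" unfolding w
      by (rule the_equality) (use c un in auto)
    then show "root_rel p R a b" using bw c rr[OF b] by simp
  qed
qed





lemma RDP_simps:
  "carrier (RDirProd R S) = carrier R \<times> carrier S"
  "\<one>\<^bsub>RDirProd R S\<^esub> = (\<one>\<^bsub>R\<^esub>, \<one>\<^bsub>S\<^esub>)"
  "\<zero>\<^bsub>RDirProd R S\<^esub> = (\<zero>\<^bsub>R\<^esub>, \<zero>\<^bsub>S\<^esub>)"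
  "(a, b) \<otimes>\<^bsub>RDirProd R S\<^esub> (c, d) = (a \<otimes>\<^bsub>R\<^esub> c, b \<otimes>\<^bsub>S\<^esub> d)"
  "(a, b) \<oplus>\<^bsub>RDirProd R S\<^esub> (c, d) = (a \<oplus>\<^bsub>R\<^esub> c, b \<oplus>\<^bsub>S\<^esub> d)"
  by (simp_all add: RDirProd_def DirProd_def monoid.defs)

lemma RDP_pow: "(a, b) [^]\<^bsub>RDirProd R S\<^esub> (n::nat) = (a [^]\<^bsub>R\<^esub> n, b [^]\<^bsub>S\<^esub> n)"
  by (induct n) (simp_all add: RDP_simps)

lemma RDP_cring:
  assumes "cring R" "cring S" shows "cring (RDirProd R S)"
proof -
  interpret R: cring R by fact
  interpret S: cring S by fact
  interpret P: ring "RDirProd R S" by (rule RDirProd_ring) (simp_all add: R.ring_axioms S.ring_axioms)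
  show ?thesis
  proof (rule cring.intro)
    show "ring (RDirProd R S)" by (rule P.ring_axioms)
    show "comm_monoid (RDirProd R S)"
    proof (rule comm_monoidI)
      fix x y assume "x \<in> carrier (RDirProd R S)" "y \<in> carrier (RDirProd R S)"
      then show "x \<otimes>\<^bsub>RDirProd R S\<^esub> y = y \<otimes>\<^bsub>RDirProd R S\<^esub> x"
        by (cases x, cases y) (simp add: RDP_simps R.m_comm S.m_comm)
    qed (simp_all add: P.m_assoc)
  qed
qed

lemma RDP_red:
  assumes "\<forall>x\<in>carrier R. \<forall>n::nat. x [^]\<^bsub>R\<^esub> n = \<zero>\<^bsub>R\<^esub> \<longrightarrow> x = \<zero>\<^bsub>R\<^esub>"
    and "\<forall>x\<in>carrier S. \<forall>n::nat. x [^]\<^bsub>S\<^esub> n = \<zero>\<^bsub>S\<^esub> \<longrightarrow> x = \<zero>\<^bsub>S\<^esub>"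
  shows "\<forall>x\<in>carrier (RDirProd R S). \<forall>n::nat. x [^]\<^bsub>RDirProd R S\<^esub> n = \<zero>\<^bsub>RDirProd R S\<^esub> \<longrightarrow> x = \<zero>\<^bsub>RDirProd R S\<^esub>"
  using assms by (auto simp: RDP_simps RDP_pow)

lemma (in cr) frob_hom:
  assumes p: "prime p" and P: "numc R p = \<zero>"
  shows "(\<lambda>x. x [^] p) \<in> ring_hom R R"
proof (rule ring_hom_memI)
  fix x y assume x: "x \<in> carrier R" and y: "y \<in> carrier R"
  show "(x \<otimes> y) [^] p = x [^] p \<otimes> y [^] p" using x y by (simp add: nat_pow_distrib)
  show "(x \<oplus> y) [^] p = x [^] p \<oplus> y [^] p" using freshman[OF p x y] P x by simp
qed simp_all

locale loc = cr R for R (structure) +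
  fixes s assumes s: "s \<in> carrier R"
  and red: "\<forall>x\<in>carrier R. \<forall>n::nat. x [^] n = \<zero> \<longrightarrow> x = \<zero>"
begin

lemma spc[simp]: "s [^] (n::nat) \<in> carrier R" using s by simp

lemma red_cancel:
  assumes a: "a \<in> carrier R" and t: "t \<in> carrier R" and h: "a [^] (k::nat) \<otimes> t = \<zero>"
  shows "a \<otimes> t = \<zero>"
proof -
  have "(a \<otimes> t) [^] Suc k = (a [^] k \<otimes> t) \<otimes> (a \<otimes> t [^] k)"
  proof -
    have "(a \<otimes> t) [^] Suc k = (a [^] k \<otimes> t [^] k) \<otimes> (a \<otimes> t)"
      using a t by (simp add: nat_pow_distrib)
    also have "\<dots> = (a [^] k \<otimes> t) \<otimes> (a \<otimes> t [^] k)"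
      using a t nat_pow_closed[OF a, of k] nat_pow_closed[OF t, of k] by algebra
    finally show ?thesis .
  qed
  also have "\<dots> = \<zero>" using h a t by simp
  finally show ?thesis using red a t by blast
qed

lemma red_sq: "x \<in> carrier R \<Longrightarrow> x \<otimes> x = \<zero> \<Longrightarrow> x = \<zero>"
proof -
  assume x: "x \<in> carrier R" and h: "x \<otimes> x = \<zero>"
  have "x [^] (2::nat) = \<zero>" using x h by (simp add: numeral_2_eq_2 nat_pow_Suc)
  then show "x = \<zero>" using red x by blast
qed

definition lrel :: "'a \<times> nat \<Rightarrow> 'a \<times> nat \<Rightarrow> bool" where
  "lrel x y \<longleftrightarrow> fst x \<in> carrier R \<and> fst y \<in> carrier R \<and>
     s \<otimes> (s [^] snd y \<otimes> fst x) = s \<otimes> (s [^] snd x \<otimes> fst y)"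

lemma lrel_refl: "fst x \<in> carrier R \<Longrightarrow> lrel x x"
  by (simp add: lrel_def)

lemma lrel_sym: "lrel x y \<Longrightarrow> lrel y x"
  by (simp add: lrel_def)

lemma lrel_trans:
  assumes xy: "lrel x y" and yz: "lrel y z" shows "lrel x z"
proof -
  obtain a n where x: "x = (a, n)" by (cases x)
  obtain b m where y: "y = (b, m)" by (cases y)
  obtain c k where z: "z = (c, k)" by (cases z)
  have a: "a \<in> carrier R" and b: "b \<in> carrier R" and c: "c \<in> carrier R"
    using xy yz x y z by (auto simp: lrel_def)
  have H1: "s \<otimes> (s [^] m \<otimes> a) = s \<otimes> (s [^] n \<otimes> b)" using xy x y by (simp add: lrel_def)
  have H2: "s \<otimes> (s [^] k \<otimes> b) = s \<otimes> (s [^] m \<otimes> c)" using yz y z by (simp add: lrel_def)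
  define d where "d = s [^] k \<otimes> a \<ominus> s [^] n \<otimes> c"
  have dc: "d \<in> carrier R" unfolding d_def using a c by simp
  have "s [^] Suc m \<otimes> d = s [^] k \<otimes> (s \<otimes> (s [^] m \<otimes> a)) \<ominus> s [^] n \<otimes> (s \<otimes> (s [^] m \<otimes> c))"
    unfolding d_def nat_pow_Suc using s a c spc by algebra
  also have "\<dots> = s [^] k \<otimes> (s \<otimes> (s [^] n \<otimes> b)) \<ominus> s [^] n \<otimes> (s \<otimes> (s [^] k \<otimes> b))"
    unfolding H1 H2[symmetric] ..
  also have "\<dots> = \<zero>" using s b spc by algebra
  finally have "s \<otimes> d = \<zero>" using red_cancel[OF s dc] by blast
  moreover have "s \<otimes> (s [^] k \<otimes> a) = s \<otimes> d \<oplus> s \<otimes> (s [^] n \<otimes> c)"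
    unfolding d_def using s a c spc by algebra
  ultimately have "s \<otimes> (s [^] k \<otimes> a) = s \<otimes> (s [^] n \<otimes> c)"
    using s c by simp
  then show ?thesis using x z a c by (simp add: lrel_def)
qed

lemma pm: "s [^] (i + j) = s [^] (i::nat) \<otimes> s [^] (j::nat)"
  using s by (simp add: nat_pow_mult)

definition cls :: "'a \<times> nat \<Rightarrow> ('a \<times> nat) set" where "cls x = {y. lrel x y}"
definition rep :: "('a \<times> nat) set \<Rightarrow> 'a \<times> nat" where "rep X = (SOME x. x \<in> X)"
definition padd :: "'a \<times> nat \<Rightarrow> 'a \<times> nat \<Rightarrow> 'a \<times> nat" where
  "padd x y = (s [^] snd y \<otimes> fst x \<oplus> s [^] snd x \<otimes> fst y, snd x + snd y)"
definition pmul :: "'a \<times> nat \<Rightarrow> 'a \<times> nat \<Rightarrow> 'a \<times> nat" where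
  "pmul x y = (fst x \<otimes> fst y, snd x + snd y)"
definition Lcar :: "('a \<times> nat) set set" where "Lcar = cls ` (carrier R \<times> UNIV)"
definition L :: "('a \<times> nat) set ring" where
  "L = \<lparr>carrier = Lcar, monoid.mult = (\<lambda>X Y. cls (pmul (rep X) (rep Y))), one = cls (\<one>, 0),
        zero = cls (\<zero>, 0), add = (\<lambda>X Y. cls (padd (rep X) (rep Y)))\<rparr>"

lemma L_simps: "carrier L = Lcar" "\<one>\<^bsub>L\<^esub> = cls (\<one>, 0)" "\<zero>\<^bsub>L\<^esub> = cls (\<zero>, 0)"
  "X \<otimes>\<^bsub>L\<^esub> Y = cls (pmul (rep X) (rep Y))" "X \<oplus>\<^bsub>L\<^esub> Y = cls (padd (rep X) (rep Y))"
  by (simp_all add: L_def)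

lemma cls_mem: "fst x \<in> carrier R \<Longrightarrow> x \<in> cls x"
  by (simp add: cls_def lrel_refl)

lemma cls_eq: "fst x \<in> carrier R \<Longrightarrow> fst y \<in> carrier R \<Longrightarrow> cls x = cls y \<longleftrightarrow> lrel x y"
proof
  assume "fst x \<in> carrier R" "fst y \<in> carrier R" "cls x = cls y"
  then show "lrel x y" using cls_mem[of y] by (auto simp: cls_def)
next
  assume "lrel x y"
  then show "cls x = cls y" unfolding cls_def by (auto intro: lrel_trans lrel_sym)
qed

lemma rep_cls: "fst x \<in> carrier R \<Longrightarrow> lrel x (rep (cls x))"
  unfolding rep_def using someI[of "\<lambda>y. y \<in> cls x" x] cls_mem[of x] by (simp add: cls_def)

lemma rep_carrier: "fst x \<in> carrier R \<Longrightarrow> fst (rep (cls x)) \<in> carrier R"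
  using rep_cls by (simp add: lrel_def)

lemma padd_comm: "fst x \<in> carrier R \<Longrightarrow> fst y \<in> carrier R \<Longrightarrow> padd x y = padd y x"
  by (simp add: padd_def a_comm add.commute)

lemma pmul_comm: "fst x \<in> carrier R \<Longrightarrow> fst y \<in> carrier R \<Longrightarrow> pmul x y = pmul y x"
  by (simp add: pmul_def m_comm add.commute)

lemma padd_resp1:
  assumes xx: "lrel x x'" and y: "fst y \<in> carrier R" shows "lrel (padd x y) (padd x' y)"
proof -
  obtain a n where x: "x = (a, n)" by (cases x)
  obtain a' n' where x': "x' = (a', n')" by (cases x')
  obtain b m where yy: "y = (b, m)" by (cases y)
  have a: "a \<in> carrier R" and a': "a' \<in> carrier R" and b: "b \<in> carrier R"
    using xx y x x' yy by (auto simp: lrel_def)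
  have H: "s \<otimes> (s [^] n' \<otimes> a) = s \<otimes> (s [^] n \<otimes> a')" using xx x x' by (simp add: lrel_def)
  have "s \<otimes> (s [^] (n' + m) \<otimes> (s [^] m \<otimes> a \<oplus> s [^] n \<otimes> b))
      = s [^] m \<otimes> s [^] m \<otimes> (s \<otimes> (s [^] n' \<otimes> a)) \<oplus> s \<otimes> s [^] n' \<otimes> s [^] m \<otimes> s [^] n \<otimes> b"
    unfolding pm using s a b spc by algebra
  also have "\<dots> = s [^] m \<otimes> s [^] m \<otimes> (s \<otimes> (s [^] n \<otimes> a')) \<oplus> s \<otimes> s [^] n' \<otimes> s [^] m \<otimes> s [^] n \<otimes> b"
    unfolding H ..
  also have "\<dots> = s \<otimes> (s [^] (n + m) \<otimes> (s [^] m \<otimes> a' \<oplus> s [^] n' \<otimes> b))"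
    unfolding pm using s a' b spc by algebra
  finally show ?thesis using x x' yy a a' b by (simp add: lrel_def padd_def)
qed

lemma pmul_resp1:
  assumes xx: "lrel x x'" and y: "fst y \<in> carrier R" shows "lrel (pmul x y) (pmul x' y)"
proof -
  obtain a n where x: "x = (a, n)" by (cases x)
  obtain a' n' where x': "x' = (a', n')" by (cases x')
  obtain b m where yy: "y = (b, m)" by (cases y)
  have a: "a \<in> carrier R" and a': "a' \<in> carrier R" and b: "b \<in> carrier R"
    using xx y x x' yy by (auto simp: lrel_def)
  have H: "s \<otimes> (s [^] n' \<otimes> a) = s \<otimes> (s [^] n \<otimes> a')" using xx x x' by (simp add: lrel_def)
  have "s \<otimes> (s [^] (n' + m) \<otimes> (a \<otimes> b)) = s [^] m \<otimes> b \<otimes> (s \<otimes> (s [^] n' \<otimes> a))"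
    unfolding pm using s a b spc by algebra
  also have "\<dots> = s [^] m \<otimes> b \<otimes> (s \<otimes> (s [^] n \<otimes> a'))" unfolding H ..
  also have "\<dots> = s \<otimes> (s [^] (n + m) \<otimes> (a' \<otimes> b))"
    unfolding pm using s a' b spc by algebra
  finally show ?thesis using x x' yy a a' b by (simp add: lrel_def pmul_def)
qed

lemma padd_carrier: "fst x \<in> carrier R \<Longrightarrow> fst y \<in> carrier R \<Longrightarrow> fst (padd x y) \<in> carrier R"
  by (simp add: padd_def)
lemma pmul_carrier: "fst x \<in> carrier R \<Longrightarrow> fst y \<in> carrier R \<Longrightarrow> fst (pmul x y) \<in> carrier R"
  by (simp add: pmul_def)

lemma padd_resp:
  assumes "lrel x x'" "lrel y y'" shows "lrel (padd x y) (padd x' y')"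
proof -
  have c: "fst x \<in> carrier R" "fst x' \<in> carrier R" "fst y \<in> carrier R" "fst y' \<in> carrier R"
    using assms by (auto simp: lrel_def)
  have "lrel (padd x y) (padd x' y)" using padd_resp1[OF assms(1) c(3)] .
  moreover have "lrel (padd y x') (padd y' x')" using padd_resp1[OF assms(2) c(2)] .
  ultimately show ?thesis using c padd_comm by (metis lrel_trans)
qed

lemma pmul_resp:
  assumes "lrel x x'" "lrel y y'" shows "lrel (pmul x y) (pmul x' y')"
proof -
  have c: "fst x \<in> carrier R" "fst x' \<in> carrier R" "fst y \<in> carrier R" "fst y' \<in> carrier R"
    using assms by (auto simp: lrel_def)
  have "lrel (pmul x y) (pmul x' y)" using pmul_resp1[OF assms(1) c(3)] .
  moreover have "lrel (pmul y x') (pmul y' x')" using pmul_resp1[OF assms(2) c(2)] .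
  ultimately show ?thesis using c pmul_comm by (metis lrel_trans)
qed

lemma add_cls: "fst x \<in> carrier R \<Longrightarrow> fst y \<in> carrier R \<Longrightarrow> cls x \<oplus>\<^bsub>L\<^esub> cls y = cls (padd x y)"
  unfolding L_simps
  by (subst cls_eq) (auto intro!: padd_carrier rep_carrier padd_resp lrel_sym[OF rep_cls])

lemma mul_cls: "fst x \<in> carrier R \<Longrightarrow> fst y \<in> carrier R \<Longrightarrow> cls x \<otimes>\<^bsub>L\<^esub> cls y = cls (pmul x y)"
  unfolding L_simps
  by (subst cls_eq) (auto intro!: pmul_carrier rep_carrier pmul_resp lrel_sym[OF rep_cls])

lemma LcarE: "X \<in> carrier L \<Longrightarrow> (\<And>a n. a \<in> carrier R \<Longrightarrow> X = cls (a, n) \<Longrightarrow> P) \<Longrightarrow> P"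
  unfolding L_simps Lcar_def by auto

lemma cls_in: "a \<in> carrier R \<Longrightarrow> cls (a, n) \<in> carrier L"
  unfolding L_simps Lcar_def by auto

lemma lrel_eq: "x = y \<Longrightarrow> fst x \<in> carrier R \<Longrightarrow> lrel x y"
  by (simp add: lrel_refl)

lemma L_cring: "cring L"
proof (rule cringI)
  show "abelian_group L"
  proof (rule abelian_groupI)
    fix X Y assume "X \<in> carrier L" "Y \<in> carrier L"
    then show "X \<oplus>\<^bsub>L\<^esub> Y \<in> carrier L"
      by (elim LcarE) (simp add: add_cls cls_in padd_def)
  next
    show "\<zero>\<^bsub>L\<^esub> \<in> carrier L" unfolding L_simps(3) by (rule cls_in) simp
  next
    fix X Y Z assume "X \<in> carrier L" "Y \<in> carrier L" "Z \<in> carrier L"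
    then show "X \<oplus>\<^bsub>L\<^esub> Y \<oplus>\<^bsub>L\<^esub> Z = X \<oplus>\<^bsub>L\<^esub> (Y \<oplus>\<^bsub>L\<^esub> Z)"
    proof (elim LcarE)
      fix a n b m c k assume c: "a \<in> carrier R" "b \<in> carrier R" "c \<in> carrier R"
        and e: "X = cls (a, n)" "Y = cls (b, m)" "Z = cls (c, k)"
      have "s [^] k \<otimes> (s [^] m \<otimes> a \<oplus> s [^] n \<otimes> b) \<oplus> s [^] (n + m) \<otimes> c
          = s [^] (m + k) \<otimes> a \<oplus> s [^] n \<otimes> (s [^] k \<otimes> b \<oplus> s [^] m \<otimes> c)"
        unfolding pm using c spc by algebra
      then show ?thesis using c unfolding e by (simp add: add_cls padd_def add.assoc)
    qed
  next
    fix X Y assume "X \<in> carrier L" "Y \<in> carrier L"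
    then show "X \<oplus>\<^bsub>L\<^esub> Y = Y \<oplus>\<^bsub>L\<^esub> X"
      by (elim LcarE) (simp add: add_cls padd_comm)
  next
    fix X assume "X \<in> carrier L"
    then show "\<zero>\<^bsub>L\<^esub> \<oplus>\<^bsub>L\<^esub> X = X"
      by (elim LcarE) (simp add: add_cls padd_def L_simps(3))
  next
    fix X assume "X \<in> carrier L"
    then show "\<exists>Y\<in>carrier L. Y \<oplus>\<^bsub>L\<^esub> X = \<zero>\<^bsub>L\<^esub>"
    proof (elim LcarE)
      fix a n assume a: "a \<in> carrier R" and e: "X = cls (a, n)"
      have "s [^] n \<otimes> \<ominus> a \<oplus> s [^] n \<otimes> a = \<zero>" using a spc by algebra
      then have "cls (\<ominus> a, n) \<oplus>\<^bsub>L\<^esub> X = \<zero>\<^bsub>L\<^esub>"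
        unfolding e L_simps(3) using a by (simp add: add_cls padd_def cls_eq lrel_def)
      then show ?thesis using a cls_in by blast
    qed
  qed
next
  show "comm_monoid L"
  proof (rule comm_monoidI)
    fix X Y assume "X \<in> carrier L" "Y \<in> carrier L"
    then show "X \<otimes>\<^bsub>L\<^esub> Y \<in> carrier L"
      by (elim LcarE) (simp add: mul_cls cls_in pmul_def)
  next
    show "\<one>\<^bsub>L\<^esub> \<in> carrier L" unfolding L_simps(2) by (rule cls_in) simp
  next
    fix X Y Z assume "X \<in> carrier L" "Y \<in> carrier L" "Z \<in> carrier L"
    then show "X \<otimes>\<^bsub>L\<^esub> Y \<otimes>\<^bsub>L\<^esub> Z = X \<otimes>\<^bsub>L\<^esub> (Y \<otimes>\<^bsub>L\<^esub> Z)"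
      by (elim LcarE) (simp add: mul_cls pmul_def m_assoc add.assoc)
  next
    fix X assume "X \<in> carrier L"
    then show "\<one>\<^bsub>L\<^esub> \<otimes>\<^bsub>L\<^esub> X = X"
      by (elim LcarE) (simp add: mul_cls pmul_def L_simps(2))
  next
    fix X Y assume "X \<in> carrier L" "Y \<in> carrier L"
    then show "X \<otimes>\<^bsub>L\<^esub> Y = Y \<otimes>\<^bsub>L\<^esub> X"
      by (elim LcarE) (simp add: mul_cls pmul_comm)
  qed
next
  fix X Y Z assume "X \<in> carrier L" "Y \<in> carrier L" "Z \<in> carrier L"
  then show "(X \<oplus>\<^bsub>L\<^esub> Y) \<otimes>\<^bsub>L\<^esub> Z = X \<otimes>\<^bsub>L\<^esub> Z \<oplus>\<^bsub>L\<^esub> Y \<otimes>\<^bsub>L\<^esub> Z"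
  proof (elim LcarE)
    fix a n b m c k assume c: "a \<in> carrier R" "b \<in> carrier R" "c \<in> carrier R"
      and e: "X = cls (a, n)" "Y = cls (b, m)" "Z = cls (c, k)"
    have "s \<otimes> (s [^] (n + k + (m + k)) \<otimes> ((s [^] m \<otimes> a \<oplus> s [^] n \<otimes> b) \<otimes> c))
        = s \<otimes> (s [^] (n + m + k) \<otimes> (s [^] (m + k) \<otimes> (a \<otimes> c) \<oplus> s [^] (n + k) \<otimes> (b \<otimes> c)))"
      unfolding pm using c spc s by algebra
    then show ?thesis using c unfolding e
      by (simp add: add_cls mul_cls padd_def pmul_def cls_eq lrel_def)
  qed
qed

lemma L_pow: "a \<in> carrier R \<Longrightarrow> cls (a, n) [^]\<^bsub>L\<^esub> (k::nat) = cls (a [^] k, n * k)"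
proof (induct k)
  case 0 then show ?case by (simp add: L_simps(2))
next
  case (Suc k)
  then show ?case by (simp add: mul_cls pmul_def nat_pow_Suc add.commute)
qed

lemma L_red: "\<forall>X\<in>carrier L. \<forall>k::nat. X [^]\<^bsub>L\<^esub> k = \<zero>\<^bsub>L\<^esub> \<longrightarrow> X = \<zero>\<^bsub>L\<^esub>"
proof (intro ballI allI impI)
  fix X and k :: nat assume X: "X \<in> carrier L" and h: "X [^]\<^bsub>L\<^esub> k = \<zero>\<^bsub>L\<^esub>"
  from X obtain a n where a: "a \<in> carrier R" and e: "X = cls (a, n)" by (elim LcarE)
  have "cls (a [^] k, n * k) = cls (\<zero>, 0)" using h a unfolding e L_simps(3) by (simp add: L_pow)
  then have "s \<otimes> a [^] k = \<zero>" using a s by (simp add: cls_eq lrel_def)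
  then have "a [^] k \<otimes> s = \<zero>" using a s by (simp add: m_comm)
  then have "a \<otimes> s = \<zero>" using red_cancel[OF a s] by simp
  then show "X = \<zero>\<^bsub>L\<^esub>" unfolding e L_simps(3) using a s by (simp add: cls_eq lrel_def m_comm)
qed

definition lhom :: "'a \<Rightarrow> ('a \<times> nat) set" where "lhom a = cls (a, 0)"

lemma lhom_hom: "lhom \<in> ring_hom R L"
  by (rule ring_hom_memI) (simp_all add: lhom_def cls_in mul_cls add_cls pmul_def padd_def L_simps(2))

end


context loc begin

definition Iann :: "'a set" where
  "Iann = {a \<in> carrier R. \<forall>t\<in>carrier R. s \<otimes> t = \<zero> \<longrightarrow> a \<otimes> t = \<zero>}"

lemma Iann_ideal: "ideal Iann R"
proof (rule idealI[OF ring_axioms])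
  show "subgroup Iann (add_monoid R)"
  proof (rule add.subgroupI)
    show "Iann \<subseteq> carrier R" by (auto simp: Iann_def)
    show "Iann \<noteq> {}" using zero_closed by (auto simp: Iann_def)
  next
    fix a assume "a \<in> Iann"
    then show "\<ominus> a \<in> Iann"
      by (auto simp: Iann_def l_minus)
  next
    fix a b assume "a \<in> Iann" "b \<in> Iann"
    then show "a \<oplus> b \<in> Iann"
      by (auto simp: Iann_def l_distr)
  qed
next
  fix a x assume "a \<in> Iann" "x \<in> carrier R"
  then show "x \<otimes> a \<in> Iann" by (auto simp: Iann_def m_assoc)
next
  fix a x assume "a \<in> Iann" "x \<in> carrier R"
  then show "a \<otimes> x \<in> Iann"
    unfolding Iann_def
  proof (clarsimp)
    fix t assume a: "a \<in> carrier R" and x: "x \<in> carrier R" and t: "t \<in> carrier R"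
      and h: "\<forall>t\<in>carrier R. s \<otimes> t = \<zero> \<longrightarrow> a \<otimes> t = \<zero>" and st: "s \<otimes> t = \<zero>"
    have "a \<otimes> x \<otimes> t = x \<otimes> (a \<otimes> t)" using a x t by algebra
    then show "a \<otimes> x \<otimes> t = \<zero>" using h st t x by simp
  qed
qed

lemma s_Iann: "s \<in> Iann" using s by (simp add: Iann_def)

definition Q :: "'a set ring" where "Q = R Quot Iann"

lemma Q_cring: "cring Q"
  unfolding Q_def by (rule ideal.quotient_is_cring[OF Iann_ideal is_cring])

lemma qhom: "(\<lambda>a. Iann +> a) \<in> ring_hom R Q"
  unfolding Q_def using ideal.rcos_ring_hom[OF Iann_ideal] by simp

lemma Q_zero: "\<zero>\<^bsub>Q\<^esub> = Iann" by (simp add: Q_def FactRing_def)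

lemma Q_carrier: "carrier Q = (\<lambda>a. Iann +> a) ` carrier R"
  by (auto simp: Q_def FactRing_def A_RCOSETS_def')

lemma coset_zero: "a \<in> carrier R \<Longrightarrow> Iann +> a = Iann \<longleftrightarrow> a \<in> Iann"
proof
  assume a: "a \<in> carrier R" and "Iann +> a = Iann"
  then show "a \<in> Iann"
    using abelian_subgroup.a_rcos_self[OF abelian_subgroupI3[OF ideal.axioms(1)[OF Iann_ideal] is_abelian_group] a]
    by simp
next
  assume "a \<in> Iann" then show "Iann +> a = Iann" using a_rcos_zero[OF Iann_ideal] by simp
qed

lemma Q_pow: "a \<in> carrier R \<Longrightarrow> (Iann +> a) [^]\<^bsub>Q\<^esub> (k::nat) = Iann +> a [^] k"
  using ring_hom_ring.hom_nat_pow[OF ring_hom_ringI2[OF ring_axioms cring.axioms(1)[OF Q_cring] qhom]]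
  by simp

lemma Iann_pow: "a \<in> carrier R \<Longrightarrow> a [^] (k::nat) \<in> Iann \<Longrightarrow> a \<in> Iann"
  unfolding Iann_def using red_cancel by (auto simp: m_assoc)

lemma Q_red: "\<forall>X\<in>carrier Q. \<forall>k::nat. X [^]\<^bsub>Q\<^esub> k = \<zero>\<^bsub>Q\<^esub> \<longrightarrow> X = \<zero>\<^bsub>Q\<^esub>"
proof (intro ballI allI impI)
  fix X and k :: nat assume X: "X \<in> carrier Q" and h: "X [^]\<^bsub>Q\<^esub> k = \<zero>\<^bsub>Q\<^esub>"
  from X obtain a where a: "a \<in> carrier R" and e: "X = Iann +> a" unfolding Q_carrier by auto
  have "a [^] k \<in> Iann" using h a unfolding e Q_zero by (simp add: Q_pow coset_zero)
  then have "a \<in> Iann" using Iann_pow a by blast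
  then show "X = \<zero>\<^bsub>Q\<^esub>" unfolding e Q_zero using coset_zero a by simp
qed

definition B0 :: "(('a \<times> nat) set \<times> 'a set) ring" where "B0 = RDirProd L Q"

lemma B0_cring: "cring B0" unfolding B0_def by (rule RDP_cring[OF L_cring Q_cring])

lemma B0_red: "\<forall>x\<in>carrier B0. \<forall>n::nat. x [^]\<^bsub>B0\<^esub> n = \<zero>\<^bsub>B0\<^esub> \<longrightarrow> x = \<zero>\<^bsub>B0\<^esub>"
  unfolding B0_def by (rule RDP_red[OF L_red Q_red])

lemma pair_hom:
  assumes g: "g \<in> ring_hom R Q"
  shows "(\<lambda>a. (lhom a, g a)) \<in> ring_hom R B0"
  using ring_hom_memE[OF lhom_hom] ring_hom_memE[OF g]
  unfolding B0_def by (intro ring_hom_memI) (simp_all add: RDP_simps)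

lemma pair_inj:
  assumes g: "g \<in> ring_hom R Q" and ker: "\<And>a. a \<in> carrier R \<Longrightarrow> g a = \<zero>\<^bsub>Q\<^esub> \<Longrightarrow> a \<in> Iann"
  shows "inj_on (\<lambda>a. (lhom a, g a)) (carrier R)"
proof -
  have H: "ring_hom_ring R B0 (\<lambda>a. (lhom a, g a))"
    using ring_hom_ringI2[OF ring_axioms cring.axioms(1)[OF B0_cring] pair_hom[OF g]] .
  show ?thesis
  proof (rule ring_hom_ring.trivial_ker_imp_inj[OF H])
    show "a_kernel R B0 (\<lambda>a. (lhom a, g a)) = {\<zero>}"
    proof
      have z: "(\<lambda>a. (lhom a, g a)) \<zero> = \<zero>\<^bsub>B0\<^esub>" by (rule ring_hom_zero[OF pair_hom[OF g] ring_axioms cring.axioms(1)[OF B0_cring]])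
      show "{\<zero>} \<subseteq> a_kernel R B0 (\<lambda>a. (lhom a, g a))"
        unfolding a_kernel_def' using z zero_closed by blast
      show "a_kernel R B0 (\<lambda>a. (lhom a, g a)) \<subseteq> {\<zero>}"
      proof
        fix a assume "a \<in> a_kernel R B0 (\<lambda>a. (lhom a, g a))"
        then have a: "a \<in> carrier R" and h: "(lhom a, g a) = \<zero>\<^bsub>B0\<^esub>" unfolding a_kernel_def' by blast+
        then have l: "cls (a, 0) = cls (\<zero>, 0)" and gq: "g a = \<zero>\<^bsub>Q\<^esub>"
          unfolding B0_def RDP_simps(3) L_simps(3) lhom_def by simp_all
        have sa: "s \<otimes> a = \<zero>" using l a s by (simp add: cls_eq lrel_def)
        have "a \<in> Iann" using ker[OF a gq] .
        then have "a \<otimes> a = \<zero>" using sa a by (simp add: Iann_def)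
        then show "a \<in> {\<zero>}" using red_sq[OF a] by blast
      qed
    qed
  qed
qed

end




lemma transport:
  fixes B0 :: "'s ring" and enc :: "'s \<Rightarrow> 't"
  assumes cr: "cring B0" and red: "\<forall>x\<in>carrier B0. \<forall>n::nat. x [^]\<^bsub>B0\<^esub> n = \<zero>\<^bsub>B0\<^esub> \<longrightarrow> x = \<zero>\<^bsub>B0\<^esub>"
    and inj: "inj_on enc (carrier B0)"
  shows "reduced_cring (image_ring enc B0)" "enc \<in> ring_hom B0 (image_ring enc B0)"
proof -
  have iso: "enc \<in> ring_iso B0 (image_ring enc B0)" by (rule inj_imp_image_ring_iso[OF inj])
  then show hom: "enc \<in> ring_hom B0 (image_ring enc B0)" by (simp add: ring_iso_def)
  have "cring ((image_ring enc B0) \<lparr> zero := enc \<zero>\<^bsub>B0\<^esub> \<rparr>)"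
    by (rule cring.ring_iso_imp_img_cring[OF cr iso])
  then have c: "cring (image_ring enc B0)"
    by (simp add: image_ring_def image_group_def monoid.defs)
  have rh: "ring_hom_ring B0 (image_ring enc B0) enc"
    by (rule ring_hom_ringI2[OF cring.axioms(1)[OF cr] cring.axioms(1)[OF c] hom])
  have "\<forall>x\<in>carrier (image_ring enc B0). \<forall>n::nat. x [^]\<^bsub>image_ring enc B0\<^esub> n = \<zero>\<^bsub>image_ring enc B0\<^esub> \<longrightarrow> x = \<zero>\<^bsub>image_ring enc B0\<^esub>"
  proof (intro ballI allI impI)
    fix x and n :: nat assume x: "x \<in> carrier (image_ring enc B0)"
      and h: "x [^]\<^bsub>image_ring enc B0\<^esub> n = \<zero>\<^bsub>image_ring enc B0\<^esub>"
    from x obtain a where a: "a \<in> carrier B0" and e: "x = enc a" by (auto simp: image_ring_carrier)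
    have "enc (a [^]\<^bsub>B0\<^esub> n) = enc \<zero>\<^bsub>B0\<^esub>"
      using h ring_hom_ring.hom_nat_pow[OF rh a] unfolding e by (simp add: image_ring_zero)
    then have "a [^]\<^bsub>B0\<^esub> n = \<zero>\<^bsub>B0\<^esub>"
      using inj a cring.axioms(1)[OF cr] by (auto dest: inj_onD simp: ring.ring_simprules monoid.nat_pow_closed[OF ring.axioms(2)])
    then have "a = \<zero>\<^bsub>B0\<^esub>" using red a by blast
    then show "x = \<zero>\<^bsub>image_ring enc B0\<^esub>" unfolding e by (simp add: image_ring_zero)
  qed
  then show "reduced_cring (image_ring enc B0)" using c by (simp add: reduced_cring_def)
qed

context loc begin

definition enc :: "(('a \<times> nat) set \<times> 'a set) \<Rightarrow> ('a set \<Rightarrow> 'a list)" where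
  "enc P = (\<lambda>S. if S = {} then (case rep (fst P) of (a, n) \<Rightarrow> replicate (Suc n) a)
                  else [SOME y. y \<in> snd P])"

lemma B0_carrier: "carrier B0 = Lcar \<times> carrier Q"
  by (simp add: B0_def RDP_simps L_simps)

lemma Iann_subgroup: "subgroup Iann (add_monoid R)"
  using ideal.axioms(1)[OF Iann_ideal] by (simp add: additive_subgroup_def)

lemma enc_inj: "inj_on enc (carrier B0)"
proof (rule inj_onI)
  fix P P' assume P: "P \<in> carrier B0" and P': "P' \<in> carrier B0" and e: "enc P = enc P'"
  obtain X Y where PXY: "P = (X, Y)" by (cases P)
  obtain X' Y' where PXY': "P' = (X', Y')" by (cases P')
  obtain a n where a: "a \<in> carrier R" and X: "X = cls (a, n)"
    using P PXY unfolding B0_carrier Lcar_def by auto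
  obtain a' n' where a': "a' \<in> carrier R" and X': "X' = cls (a', n')"
    using P' PXY' unfolding B0_carrier Lcar_def by auto
  obtain b where b: "b \<in> carrier R" and Y: "Y = Iann +> b"
    using P PXY unfolding B0_carrier Q_carrier by auto
  obtain b' where b': "b' \<in> carrier R" and Y': "Y' = Iann +> b'"
    using P' PXY' unfolding B0_carrier Q_carrier by auto
  have e1: "enc P {} = enc P' {}" using e by simp
  have "(case rep X of (a, n) \<Rightarrow> replicate (Suc n) a) = (case rep X' of (a, n) \<Rightarrow> replicate (Suc n) a)"
    using e1 unfolding enc_def PXY PXY' by simp
  then have rr: "rep X = rep X'"
    by (cases "rep X", cases "rep X'") (simp add: replicate_eq_replicate)
  have "lrel (a, n) (rep X)" unfolding X using rep_cls a by simp
  moreover have "lrel (a', n') (rep X)" unfolding rr X' using rep_cls a' by simp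
  ultimately have "lrel (a, n) (a', n')" using lrel_trans lrel_sym by blast
  then have XX: "X = X'" unfolding X X' using a a' by (simp add: cls_eq)
  have e2: "enc P UNIV = enc P' UNIV" using e by simp
  then have ss: "(SOME y. y \<in> Y) = (SOME y. y \<in> Y')" unfolding enc_def PXY PXY' by simp
  have ab: "abelian_subgroup Iann R"
    by (rule abelian_subgroupI3[OF ideal.axioms(1)[OF Iann_ideal] is_abelian_group])
  have bY: "b \<in> Y" unfolding Y using abelian_subgroup.a_rcos_self[OF ab b] .
  have bY': "b' \<in> Y'" unfolding Y' using abelian_subgroup.a_rcos_self[OF ab b'] .
  define r where "r = (SOME y. y \<in> Y)"
  have rY: "r \<in> Y" unfolding r_def using bY by (rule someI)
  have rY': "r \<in> Y'" unfolding r_def ss using bY' by (rule someI)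
  have "Y = Iann +> r" unfolding Y using a_repr_independence[OF rY[unfolded Y] b Iann_subgroup] .
  moreover have "Y' = Iann +> r" unfolding Y' using a_repr_independence[OF rY'[unfolded Y'] b' Iann_subgroup] .
  ultimately have "Y = Y'" by simp
  then show "P = P'" using XX PXY PXY' by simp
qed

lemma extension:
  assumes g: "g \<in> ring_hom R Q" and ker: "\<And>a. a \<in> carrier R \<Longrightarrow> g a = \<zero>\<^bsub>Q\<^esub> \<Longrightarrow> a \<in> Iann"
  shows "reduced_cring (image_ring enc B0)" "enc \<in> ring_hom B0 (image_ring enc B0)"
    "(\<lambda>a. enc (lhom a, g a)) \<in> ring_hom R (image_ring enc B0)"
    "inj_on (\<lambda>a. enc (lhom a, g a)) (carrier R)"
proof -
  show r: "reduced_cring (image_ring enc B0)" and h: "enc \<in> ring_hom B0 (image_ring enc B0)"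
    using transport[OF B0_cring B0_red enc_inj] by simp_all
  show "(\<lambda>a. enc (lhom a, g a)) \<in> ring_hom R (image_ring enc B0)"
    using ring_hom_trans[OF pair_hom[OF g] h] by (simp add: comp_def)
  have sub: "(\<lambda>a. (lhom a, g a)) ` carrier R \<subseteq> carrier B0"
    using ring_hom_memE(1)[OF pair_hom[OF g]] by auto
  show "inj_on (\<lambda>a. enc (lhom a, g a)) (carrier R)"
    using comp_inj_on[OF pair_inj[OF g ker] inj_on_subset[OF enc_inj sub]] by (simp add: comp_def)
qed

end




context loc begin

lemma inv_s: "inv_rel B0 (cls (s, 0), \<zero>\<^bsub>Q\<^esub>) (cls (\<one>, 1), \<zero>\<^bsub>Q\<^esub>)"
proof -
  interpret Qc: cr Q using Q_cring by (simp add: cr_def)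
  have "cls (s, 0) \<otimes>\<^bsub>L\<^esub> cls (s, 0) \<otimes>\<^bsub>L\<^esub> cls (\<one>, 1) = cls (s, 0)"
    using s by (simp add: mul_cls pmul_def cls_eq lrel_def nat_pow_Suc m_assoc)
  moreover have "cls (s, 0) \<otimes>\<^bsub>L\<^esub> (cls (\<one>, 1) \<otimes>\<^bsub>L\<^esub> cls (\<one>, 1)) = cls (\<one>, 1)"
    using s by (simp add: mul_cls pmul_def cls_eq lrel_def nat_pow_Suc m_assoc)
  ultimately show ?thesis unfolding inv_rel_def B0_def by (simp add: RDP_simps)
qed

lemma B0_numc:
  assumes g: "g \<in> ring_hom R Q"
  shows "numc B0 n = (lhom (numc R n), g (numc R n))"
  using hom_numc[OF is_cring B0_cring pair_hom[OF g]] by simp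

end

lemma ext_inv: "extendable_RCR (inv_rel :: ('a set \<Rightarrow> 'a list) ring \<Rightarrow> _)"
  unfolding extendable_RCR_def
proof (intro allI impI ballI)
  fix A :: "'a ring" and x assume rA: "reduced_cring A" and x: "x \<in> carrier A"
  interpret loc A x using rA x by (simp add: loc_def loc_axioms_def cr_def reduced_cring_def)
  define g where "g = (\<lambda>a. Iann +>\<^bsub>A\<^esub> a)"
  have g: "g \<in> ring_hom A Q" unfolding g_def by (rule qhom)
  have ker: "\<And>a. a \<in> carrier A \<Longrightarrow> g a = \<zero>\<^bsub>Q\<^esub> \<Longrightarrow> a \<in> Iann" unfolding g_def Q_zero using coset_zero by blast
  note E = extension[OF g ker]
  interpret Qc: cr Q using Q_cring by (simp add: cr_def)
  define y0 where "y0 = (cls (\<one>\<^bsub>A\<^esub>, 1), \<zero>\<^bsub>Q\<^esub>)"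
  have y0c: "y0 \<in> carrier B0" unfolding y0_def B0_carrier
    using cls_in[of "\<one>\<^bsub>A\<^esub>"] Qc.zero_closed by (simp add: L_simps)
  have gx: "g x = \<zero>\<^bsub>Q\<^esub>" using coset_zero s_Iann x unfolding g_def Q_zero by simp
  have "inv_rel B0 (lhom x, g x) y0" unfolding y0_def gx lhom_def by (rule inv_s)
  then have inv0: "inv_rel B0 (lhom x, g x) y0" .
  have hx: "(lhom x, g x) \<in> carrier B0"
    using x gx Qc.zero_closed by (simp add: lhom_def cls_in B0_carrier L_simps(1)[symmetric])
  have rB: "reduced_cring (image_ring enc B0)" by (rule E(1))
  have rhB: "ring_hom_ring B0 (image_ring enc B0) enc"
    using rB E(2) B0_cring by (simp add: ring_hom_ringI2 cring.axioms(1) reduced_cring_def)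
  have iv: "inv_rel (image_ring enc B0) (enc (lhom x, g x)) (enc y0)"
    by (rule inv_rel_hom[OF rhB hx y0c inv0])
  have yc: "enc y0 \<in> carrier (image_ring enc B0)" using y0c by (simp add: image_ring_carrier)
  show "\<exists>(B :: ('a set \<Rightarrow> 'a list) ring) h. reduced_cring B \<and> h \<in> ring_hom A B \<and> inj_on h (carrier A) \<and> (\<exists>y\<in>carrier B. inv_rel B (h x) y)"
  proof (intro exI conjI)
    show "reduced_cring (image_ring enc B0)" by (rule E(1))
    show "(\<lambda>a. enc (lhom a, g a)) \<in> ring_hom A (image_ring enc B0)" by (rule E(3))
    show "inj_on (\<lambda>a. enc (lhom a, g a)) (carrier A)" by (rule E(4))
    show "\<exists>y\<in>carrier (image_ring enc B0). inv_rel (image_ring enc B0) ((\<lambda>a. enc (lhom a, g a)) x) y"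
      using iv yc by auto
  qed
qed




lemma ext_root:
  assumes p: "prime p"
  shows "extendable_RCR (root_rel p :: ('a set \<Rightarrow> 'a list) ring \<Rightarrow> _)"
  unfolding extendable_RCR_def
proof (intro allI impI ballI)
  fix A :: "'a ring" and x assume rA: "reduced_cring A" and x: "x \<in> carrier A"
  have crA: "cr A" using rA by (simp add: cr_def reduced_cring_def)
  interpret loc A "numc A p" using rA cr.numc_closed[OF crA]
    by (simp add: loc_def loc_axioms_def cr_def reduced_cring_def)
  interpret Qc: cr Q using Q_cring by (simp add: cr_def)
  interpret Lc: cr L using L_cring by (simp add: cr_def)
  interpret Bc: cr B0 using B0_cring by (simp add: cr_def)
  have p0: "p \<noteq> 0" using p by auto
  have sI: "Iann +>\<^bsub>A\<^esub> numc A p = \<zero>\<^bsub>Q\<^esub>" using coset_zero[OF s] s_Iann Q_zero by simp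
  have nQ: "numc Q p = \<zero>\<^bsub>Q\<^esub>" using hom_numc[OF is_cring Q_cring qhom, of p] sI by simp
  define g where "g = (\<lambda>a. (Iann +>\<^bsub>A\<^esub> a) [^]\<^bsub>Q\<^esub> p)"
  have "(\<lambda>y. y [^]\<^bsub>Q\<^esub> p) \<circ> (\<lambda>a. Iann +>\<^bsub>A\<^esub> a) \<in> ring_hom A Q"
    by (rule ring_hom_trans[OF qhom Qc.frob_hom[OF p nQ]])
  then have g: "g \<in> ring_hom A Q" unfolding g_def comp_def .
  have ker: "a \<in> Iann" if a: "a \<in> carrier A" and ga: "g a = \<zero>\<^bsub>Q\<^esub>" for a
  proof -
    have "Iann +>\<^bsub>A\<^esub> a \<in> carrier Q" using a Q_carrier by simp
    then have "Iann +>\<^bsub>A\<^esub> a = \<zero>\<^bsub>Q\<^esub>" using Q_red ga unfolding g_def by blast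
    then show ?thesis using coset_zero[OF a] Q_zero by simp
  qed
  note E = extension[OF g ker]
  have gs: "g (numc A p) = \<zero>\<^bsub>Q\<^esub>" unfolding g_def sI using p0 Qc.nat_pow_zero by simp
  have nB: "numc B0 p = (cls (numc A p, 0), \<zero>\<^bsub>Q\<^esub>)" using B0_numc[OF g, of p] gs by (simp add: lhom_def)
  define z0 where "z0 = (cls (\<one>\<^bsub>A\<^esub>, 1), \<zero>\<^bsub>Q\<^esub>)"
  have z0c: "z0 \<in> carrier B0" unfolding z0_def B0_carrier
    using cls_in[of "\<one>\<^bsub>A\<^esub>"] Qc.zero_closed by (simp add: L_simps)
  have iz: "inv_rel B0 (numc B0 p) z0" unfolding nB z0_def by (rule inv_s)
  define y0 where "y0 = (\<zero>\<^bsub>L\<^esub>, Iann +>\<^bsub>A\<^esub> x)"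
  have y0c: "y0 \<in> carrier B0" unfolding y0_def B0_carrier using x Q_carrier Lc.zero_closed L_simps(1) by auto
  have hx: "(lhom x, g x) \<in> carrier B0" using ring_hom_memE(1)[OF pair_hom[OF g] x] .
  have gxc: "g x \<in> carrier Q" using hx by (simp add: B0_carrier)
  have r1: "y0 [^]\<^bsub>B0\<^esub> p = (\<zero>\<^bsub>L\<^esub>, g x)"
    unfolding y0_def B0_def RDP_pow g_def using p0 Lc.nat_pow_zero by simp
  have r2: "z0 \<otimes>\<^bsub>B0\<^esub> numc B0 p = (\<one>\<^bsub>L\<^esub>, \<zero>\<^bsub>Q\<^esub>)"
  proof -
    have "cls (\<one>\<^bsub>A\<^esub>, 1) \<otimes>\<^bsub>L\<^esub> cls (numc A p, 0) = \<one>\<^bsub>L\<^esub>"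
      using s by (simp add: mul_cls pmul_def L_simps(2) cls_eq lrel_def nat_pow_Suc)
    then show ?thesis unfolding nB z0_def by (simp add: B0_def RDP_simps)
  qed
  have w: "(\<one>\<^bsub>L\<^esub>, \<zero>\<^bsub>Q\<^esub>) \<in> carrier B0" and v: "(\<zero>\<^bsub>L\<^esub>, \<one>\<^bsub>Q\<^esub>) \<in> carrier B0"
    by (simp_all add: B0_carrier L_simps(1)[symmetric])
  have vw: "(\<zero>\<^bsub>L\<^esub>, \<one>\<^bsub>Q\<^esub>) \<oplus>\<^bsub>B0\<^esub> (\<one>\<^bsub>L\<^esub>, \<zero>\<^bsub>Q\<^esub>) = \<one>\<^bsub>B0\<^esub>"
    unfolding B0_def by (simp add: RDP_simps)
  have r3: "\<one>\<^bsub>B0\<^esub> \<ominus>\<^bsub>B0\<^esub> (\<one>\<^bsub>L\<^esub>, \<zero>\<^bsub>Q\<^esub>) = (\<zero>\<^bsub>L\<^esub>, \<one>\<^bsub>Q\<^esub>)"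
  proof -
    have "\<one>\<^bsub>B0\<^esub> \<ominus>\<^bsub>B0\<^esub> (\<one>\<^bsub>L\<^esub>, \<zero>\<^bsub>Q\<^esub>) = ((\<zero>\<^bsub>L\<^esub>, \<one>\<^bsub>Q\<^esub>) \<oplus>\<^bsub>B0\<^esub> (\<one>\<^bsub>L\<^esub>, \<zero>\<^bsub>Q\<^esub>)) \<ominus>\<^bsub>B0\<^esub> (\<one>\<^bsub>L\<^esub>, \<zero>\<^bsub>Q\<^esub>)"
      unfolding vw ..
    also have "\<dots> = (\<zero>\<^bsub>L\<^esub>, \<one>\<^bsub>Q\<^esub>)" using v w by algebra
    finally show ?thesis .
  qed
  have r4: "(\<zero>\<^bsub>L\<^esub>, \<one>\<^bsub>Q\<^esub>) \<otimes>\<^bsub>B0\<^esub> (lhom x, g x) = (\<zero>\<^bsub>L\<^esub>, g x)"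
    using hx gxc unfolding B0_def by (simp add: RDP_simps B0_carrier)
  have root0: "root_rel p B0 (lhom x, g x) y0"
    unfolding root_rel_def using z0c iz r1 r2 r3 r4 by auto
  have rB: "reduced_cring (image_ring enc B0)" by (rule E(1))
  have crB: "cring (image_ring enc B0)" using rB by (simp add: reduced_cring_def)
  have rt: "root_rel p (image_ring enc B0) (enc (lhom x, g x)) (enc y0)"
    by (rule root_rel_hom[OF B0_cring crB E(2) hx y0c root0])
  have yc: "enc y0 \<in> carrier (image_ring enc B0)" using y0c by (simp add: image_ring_carrier)
  show "\<exists>(B :: ('a set \<Rightarrow> 'a list) ring) h. reduced_cring B \<and> h \<in> ring_hom A B \<and> inj_on h (carrier A) \<and> (\<exists>y\<in>carrier B. root_rel p B (h x) y)"
  proof (intro exI conjI)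
    show "reduced_cring (image_ring enc B0)" by (rule E(1))
    show "(\<lambda>a. enc (lhom a, g a)) \<in> ring_hom A (image_ring enc B0)" by (rule E(3))
    show "inj_on (\<lambda>a. enc (lhom a, g a)) (carrier A)" by (rule E(4))
    show "\<exists>y\<in>carrier (image_ring enc B0). root_rel p (image_ring enc B0) ((\<lambda>a. enc (lhom a, g a)) x) y"
      using rt yc by auto
  qed
qed




theorem mainTheorem14:
  fixes p :: nat
  assumes "prime p"
  shows
   "(functional_in_RCR (inv_rel :: 'a ring \<Rightarrow> 'a \<Rightarrow> 'a \<Rightarrow> bool)
     \<and> preserved_by_homs (inv_rel :: 'a ring \<Rightarrow> _) (inv_rel :: 'b ring \<Rightarrow> _)
     \<and> extendable_RCR (inv_rel :: ('a set \<Rightarrow> 'a list) ring \<Rightarrow> _)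
     \<and> (\<forall>F :: 'c ring. weakly_rooted_field F \<longrightarrow>
          (\<forall>a\<in>carrier F. \<forall>b\<in>carrier F. inv_rel F a b \<longleftrightarrow> b = weak_inv F a)))
    \<and>
    (functional_in_RCR (root_rel p :: 'a ring \<Rightarrow> 'a \<Rightarrow> 'a \<Rightarrow> bool)
     \<and> preserved_by_homs (root_rel p :: 'a ring \<Rightarrow> _) (root_rel p :: 'b ring \<Rightarrow> _)
     \<and> extendable_RCR (root_rel p :: ('a set \<Rightarrow> 'a list) ring \<Rightarrow> _)
     \<and> (\<forall>F :: 'c ring. weakly_rooted_field F \<longrightarrow>
          (\<forall>a\<in>carrier F. \<forall>b\<in>carrier F. root_rel p F a b \<longleftrightarrow> b = weak_root p F a)))"
proof (intro conjI)
  show "functional_in_RCR (inv_rel :: 'a ring \<Rightarrow> 'a \<Rightarrow> 'a \<Rightarrow> bool)"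
    unfolding functional_in_RCR_def
  proof (intro allI impI ballI)
    fix A :: "'a ring" and x y1 y2
    assume rA: "reduced_cring A" and c: "x \<in> carrier A" "y1 \<in> carrier A" "y2 \<in> carrier A"
    have crA: "cr A" using rA unfolding cr_def reduced_cring_def by blast
    assume h1: "inv_rel A x y1" and h2: "inv_rel A x y2"
    show "y1 = y2" by (rule cr.inv_rel_unique[OF crA c h1 h2])
  qed
  show "preserved_by_homs (inv_rel :: 'a ring \<Rightarrow> _) (inv_rel :: 'b ring \<Rightarrow> _)"
    unfolding preserved_by_homs_def
  proof (intro allI impI ballI)
    fix A :: "'a ring" and B :: "'b ring" and h x y
    assume a1: "reduced_cring A" and a2: "reduced_cring B" and hh: "h \<in> ring_hom A B"
      and xy: "x \<in> carrier A" "y \<in> carrier A" and hi: "inv_rel A x y"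
    have cA: "cring A" using a1 unfolding reduced_cring_def by blast
    have cB: "cring B" using a2 unfolding reduced_cring_def by blast
    show "inv_rel B (h x) (h y)"
      by (rule inv_rel_hom[OF ring_hom_ringI2[OF cring.axioms(1)[OF cA] cring.axioms(1)[OF cB] hh] xy hi])
  qed
  show "extendable_RCR (inv_rel :: ('a set \<Rightarrow> 'a list) ring \<Rightarrow> _)" by (rule ext_inv)
  show "\<forall>F :: 'c ring. weakly_rooted_field F \<longrightarrow>
          (\<forall>a\<in>carrier F. \<forall>b\<in>carrier F. inv_rel F a b \<longleftrightarrow> b = weak_inv F a)"
  proof (intro allI impI ballI)
    fix F :: "'c ring" and a b assume wr: "weakly_rooted_field F" and ab: "a \<in> carrier F" "b \<in> carrier F"
    have "fd F" using wr by (simp add: fd_def weakly_rooted_field_def)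
    then show "inv_rel F a b \<longleftrightarrow> b = weak_inv F a"
      by (rule fd.inv_rel_field[OF _ ab])
  qed
  show "functional_in_RCR (root_rel p :: 'a ring \<Rightarrow> 'a \<Rightarrow> 'a \<Rightarrow> bool)"
    unfolding functional_in_RCR_def
  proof (intro allI impI ballI)
    fix A :: "'a ring" and x y1 y2
    assume rA: "reduced_cring A" and c: "x \<in> carrier A" "y1 \<in> carrier A" "y2 \<in> carrier A"
    have crA: "cr A" using rA unfolding cr_def reduced_cring_def by blast
    assume h1: "root_rel p A x y1" and h2: "root_rel p A x y2"
    have red: "\<forall>x\<in>carrier A. \<forall>n::nat. x [^]\<^bsub>A\<^esub> n = \<zero>\<^bsub>A\<^esub> \<longrightarrow> x = \<zero>\<^bsub>A\<^esub>"
      using rA unfolding reduced_cring_def by blast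
    show "y1 = y2"
      by (rule cr.root_rel_unique[OF crA red assms c h1 h2])
  qed
  show "preserved_by_homs (root_rel p :: 'a ring \<Rightarrow> _) (root_rel p :: 'b ring \<Rightarrow> _)"
    unfolding preserved_by_homs_def
  proof (intro allI impI ballI)
    fix A :: "'a ring" and B :: "'b ring" and h x y
    assume a1: "reduced_cring A" and a2: "reduced_cring B" and hh: "h \<in> ring_hom A B"
      and xy: "x \<in> carrier A" "y \<in> carrier A" and hi: "root_rel p A x y"
    have cA: "cring A" using a1 unfolding reduced_cring_def by blast
    have cB: "cring B" using a2 unfolding reduced_cring_def by blast
    show "root_rel p B (h x) (h y)"
      by (rule root_rel_hom[OF cA cB hh xy hi])
  qed
  show "extendable_RCR (root_rel p :: ('a set \<Rightarrow> 'a list) ring \<Rightarrow> _)" by (rule ext_root[OF assms])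
  show "\<forall>F :: 'c ring. weakly_rooted_field F \<longrightarrow>
          (\<forall>a\<in>carrier F. \<forall>b\<in>carrier F. root_rel p F a b \<longleftrightarrow> b = weak_root p F a)"
  proof (intro allI impI ballI)
    fix F :: "'c ring" and a b assume wr: "weakly_rooted_field F" and ab: "a \<in> carrier F" "b \<in> carrier F"
    have "fd F" using wr by (simp add: fd_def weakly_rooted_field_def)
    then show "root_rel p F a b \<longleftrightarrow> b = weak_root p F a"
      using fd.root_rel_field[OF _ wr assms ab] by simp
  qed
qed


end
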